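(* For every $n\ge 2$, $f(n,n-1)=f(n+1,n-1)-f(n,n-2)$.
   Context: A complete non-ambiguous matrix (CNM) of size $n$ is an $n\times n$ matrix $M=(m_{i,j})$ with entries in $\{0,1\}$ whose support $T=\{(i,j): m_{i,j}=1\}$ (whose elements are called vertices) satisfies: (1) $(1,1)\in T$; (2) for every $p=(i,j)\in T$ with $p\neq(1,1)$, exactly one of the following holds: there is $(i',j)\in T$ with $i'<i$, or there is $(i,j')\in T$ with $j'<j$; (3) every row and every column of $M$ contains at least one vertex; (4) define the parent of $p=(i,j)\neq(1,1)$ to be $(i',j)$ with $i'<i$ maximal if such a vertex exists, and otherwise $(i,j')$ with $j'<j$ maximal; then every vertex is the parent of either zero or exactly two vertices. A vertex with no children is a leaf. A CNM of size $n$ is upper-diagonal if its leaves are exactly the positions $(i,n+1-i)$, $1\le i\le n$. For $n\ge 2$ and $0\le k\le n-2$, $f(n,k)$ is the number of upper-diagonal CNMs $M$ of size $n$ with $m_{i,n-i}=0$ for $1\le i\le k$ and $m_{k+1,n-k-1}=1$; $f(n,n-1)$ is the number of upper-diagonal CNMs of size $n$ with $m_{i,n-i}=0$ for all $1\le i\le n-1$; by convention $f(n,-1)=0$. *)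

theory Defs
  imports Main
begin

text \<open>A CNM of size n is identified with its support T (set of vertices),
  a set of 1-based positions (i,j) with 1 \<le> i,j \<le> n.\<close>

definition parent :: "(nat \<times> nat) set \<Rightarrow> nat \<times> nat \<Rightarrow> nat \<times> nat" where
  "parent T p = (case p of (i, j) \<Rightarrow>
     if \<exists>i'<i. (i', j) \<in> T then (Max {i'. i' < i \<and> (i', j) \<in> T}, j)
     else (i, Max {j'. j' < j \<and> (i, j') \<in> T}))"

definition children :: "(nat \<times> nat) set \<Rightarrow> nat \<times> nat \<Rightarrow> (nat \<times> nat) set" where
  "children T p = {q \<in> T. q \<noteq> (1, 1) \<and> parent T q = p}"

definition is_cnm :: "nat \<Rightarrow> (nat \<times> nat) set \<Rightarrow> bool" where
  "is_cnm n T \<longleftrightarrow>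
     T \<subseteq> {1..n} \<times> {1..n} \<and>
     (1, 1) \<in> T \<and>
     (\<forall>(i, j) \<in> T. (i, j) \<noteq> (1, 1) \<longrightarrow>
        ((\<exists>i'<i. (i', j) \<in> T) \<noteq> (\<exists>j'<j. (i, j') \<in> T))) \<and>
     (\<forall>i\<in>{1..n}. \<exists>j. (i, j) \<in> T) \<and>
     (\<forall>j\<in>{1..n}. \<exists>i. (i, j) \<in> T) \<and>
     (\<forall>p\<in>T. card (children T p) = 0 \<or> card (children T p) = 2)"

definition leaves :: "(nat \<times> nat) set \<Rightarrow> (nat \<times> nat) set" where
  "leaves T = {p \<in> T. children T p = {}}"

definition upper_diagonal_cnm :: "nat \<Rightarrow> (nat \<times> nat) set \<Rightarrow> bool" where
  "upper_diagonal_cnm n T \<longleftrightarrow> is_cnm n T \<and> leaves T = {(i, n + 1 - i) | i. i \<in> {1..n}}"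

text \<open>f n k for 0 \<le> k \<le> n-2 and for k = n-1 (value 0 outside this range; the
  convention f(n,-1)=0 is not needed for the statement).\<close>
definition f :: "nat \<Rightarrow> nat \<Rightarrow> nat" where
  "f n k =
    (if k + 2 \<le> n then
       card {T. upper_diagonal_cnm n T \<and> (\<forall>i\<in>{1..k}. (i, n - i) \<notin> T)
               \<and> (k + 1, n - k - 1) \<in> T}
     else if k + 1 = n then
       card {T. upper_diagonal_cnm n T \<and> (\<forall>i\<in>{1..n-1}. (i, n - i) \<notin> T)}
     else 0)"

end

theory Submission
  imports Defs
begin

definition sh :: "nat \<Rightarrow> nat" where "sh j = (if j \<le> 1 then j else Suc j)"
definition g :: "nat \<times> nat \<Rightarrow> nat \<times> nat" where "g p = (fst p, sh (snd p))"
definition psi :: "nat \<Rightarrow> (nat \<times> nat) set \<Rightarrow> (nat \<times> nat) set" where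
  "psi n S = g ` S \<union> {(n,2),(n+1,1)}"
definition EO :: "(nat \<times> nat) set \<Rightarrow> bool" where
  "EO T \<longleftrightarrow> (\<forall>(i, j) \<in> T. (i, j) \<noteq> (1, 1) \<longrightarrow>
        ((\<exists>i'<i. (i', j) \<in> T) \<noteq> (\<exists>j'<j. (i, j') \<in> T)))"

lemma sh_eq[simp]: "sh a = sh b \<longleftrightarrow> a = b" by (auto simp: sh_def)
lemma sh_less[simp]: "sh a < sh b \<longleftrightarrow> a < b" by (auto simp: sh_def)
lemma sh_ne2[simp]: "sh a \<noteq> 2" by (auto simp: sh_def)
lemma sh_1[simp]: "sh 1 = 1" "sh a = 1 \<longleftrightarrow> a = 1" by (auto simp: sh_def)
lemma sh_Suc0[simp]: "sh (Suc 0) = Suc 0" "sh a = Suc 0 \<longleftrightarrow> a = Suc 0" "sh a = 0 \<longleftrightarrow> a = 0"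
  by (auto simp: sh_def)
lemma g_simp[simp]: "g (i,j) = (i, sh j)" by (simp add: g_def)
lemma g_eq[simp]: "g p = g q \<longleftrightarrow> p = q" by (cases p; cases q; simp)
lemma g_img[simp]: "(a, c) \<in> g ` S \<longleftrightarrow> (\<exists>b. c = sh b \<and> (a,b) \<in> S)"
proof
  assume "(a, c) \<in> g ` S"
  then obtain x where "x \<in> S" "(a,c) = g x" by auto
  then show "\<exists>b. c = sh b \<and> (a,b) \<in> S" by (cases x) auto
next
  assume "\<exists>b. c = sh b \<and> (a,b) \<in> S"
  then obtain b where "c = sh b" "(a,b) \<in> S" by auto
  then show "(a, c) \<in> g ` S" by (intro image_eqI[of _ _ "(a,b)"]) auto
qed
lemma g_img_sh[simp]: "(a, sh c) \<in> g ` S \<longleftrightarrow> (a,c) \<in> S"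
  by auto
lemma inj_g: "inj g" by (auto intro: injI)
lemma mono_sh: "mono sh" unfolding mono_def sh_def by auto

lemma EO_D: "EO T \<Longrightarrow> (i,j) \<in> T \<Longrightarrow> (i,j) \<noteq> (1,1) \<Longrightarrow>
   (\<exists>i'<i. (i', j) \<in> T) \<noteq> (\<exists>j'<j. (i, j') \<in> T)"
  unfolding EO_def by blast

lemma cnm_EO: "is_cnm n T \<Longrightarrow> EO T" unfolding is_cnm_def EO_def by blast

lemma parent_above:
  assumes "\<exists>i'<i. (i', j) \<in> T"
  shows "parent T (i,j) = (Max {i'. i' < i \<and> (i', j) \<in> T}, j)"
  using assms unfolding parent_def by simp

lemma parent_left:
  assumes "\<not>(\<exists>i'<i. (i', j) \<in> T)"
  shows "parent T (i,j) = (i, Max {j'. j' < j \<and> (i, j') \<in> T})"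
  unfolding parent_def prod.case if_not_P[OF assms] by (rule refl)

lemma parent_props:
  assumes "EO T" "q \<in> T" "q \<noteq> (1,1)"
  shows "parent T q \<in> T \<and> fst (parent T q) \<le> fst q \<and> snd (parent T q) \<le> snd q
     \<and> fst (parent T q) + snd (parent T q) < fst q + snd q"
proof -
  obtain i j where q: "q = (i,j)" by (cases q)
  show ?thesis
  proof (cases "\<exists>i'<i. (i', j) \<in> T")
    case True
    let ?A = "{i'. i' < i \<and> (i', j) \<in> T}"
    have fin: "finite ?A" by (rule finite_subset[of _ "{..<i}"]) auto
    have ne: "?A \<noteq> {}" using True by auto
    have "Max ?A \<in> ?A" using fin ne by (rule Max_in)
    then show ?thesis using parent_above[OF True] q by auto
  next
    case False
    then have L: "\<exists>j'<j. (i, j') \<in> T" using EO_D[OF assms(1)] assms(2,3) q by blast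
    let ?A = "{j'. j' < j \<and> (i, j') \<in> T}"
    have fin: "finite ?A" by (rule finite_subset[of _ "{..<j}"]) auto
    have ne: "?A \<noteq> {}" using L by auto
    have "Max ?A \<in> ?A" using fin ne by (rule Max_in)
    then show ?thesis using parent_left[OF False] q by auto
  qed
qed

lemma triangle:
  assumes U: "upper_diagonal_cnm n T" and p: "p \<in> T"
  shows "fst p + snd p \<le> n+1"
proof (rule ccontr)
  assume nle: "\<not> fst p + snd p \<le> n+1"
  have cnm: "is_cnm n T" using U unfolding upper_diagonal_cnm_def by simp
  have sub: "T \<subseteq> {1..n} \<times> {1..n}" using cnm unfolding is_cnm_def by simp
  have finT: "finite T" by (rule finite_subset[OF sub]) auto
  have eo: "EO T" using cnm by (rule cnm_EO)
  let ?s = "\<lambda>p::nat\<times>nat. fst p + snd p"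
  let ?B = "{p\<in>T. ?s p > n+1}"
  have finB: "finite ?B" using finT by simp
  have neB: "?B \<noteq> {}" using p nle by (cases p) (auto simp del: not_le simp: not_le[symmetric])
  have "Max (?s ` ?B) \<in> ?s ` ?B" using finB neB by (intro Max_in) auto
  then obtain p0 where p0: "p0 \<in> ?B" "?s p0 = Max (?s ` ?B)" by auto
  have maxp: "\<And>q. q \<in> ?B \<Longrightarrow> ?s q \<le> ?s p0"
    using p0(2) finB by (metis (no_types, lifting) Max_ge finite_imageI image_eqI)
  have "p0 \<notin> leaves T"
  proof
    assume "p0 \<in> leaves T"
    then obtain i where "p0 = (i, n+1-i)" "i \<in> {1..n}" using U unfolding upper_diagonal_cnm_def by auto
    then show False using p0(1) by auto
  qed
  then have "children T p0 \<noteq> {}" using p0(1) unfolding leaves_def by auto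
  then obtain q where q: "q \<in> T" "q \<noteq> (1,1)" "parent T q = p0" unfolding children_def by auto
  have "?s p0 < ?s q" using parent_props[OF eo q(1,2)] q(3) by simp
  then have "q \<in> ?B" using p0(1) q(1) by auto
  with maxp \<open>?s p0 < ?s q\<close> show False by fastforce
qed

lemma psi_g: "fst p \<le> n \<Longrightarrow> g p \<in> psi n S \<longleftrightarrow> p \<in> S"
  by (cases p) (auto simp: psi_def)

lemma psi_cases: "q \<in> psi n S \<Longrightarrow> (\<And>p. p \<in> S \<Longrightarrow> q = g p \<Longrightarrow> P) \<Longrightarrow> (q = (n,2) \<Longrightarrow> P)
   \<Longrightarrow> (q = (n+1,1) \<Longrightarrow> P) \<Longrightarrow> P"
  unfolding psi_def by blast


lemma is_cnm_alt: "is_cnm n T \<longleftrightarrow> T \<subseteq> {1..n} \<times> {1..n} \<and> (1, 1) \<in> T \<and> EO T \<and>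
     (\<forall>i\<in>{1..n}. \<exists>j. (i, j) \<in> T) \<and> (\<forall>j\<in>{1..n}. \<exists>i. (i, j) \<in> T) \<and>
     (\<forall>p\<in>T. card (children T p) = 0 \<or> card (children T p) = 2)"
  unfolding is_cnm_def EO_def by blast

context
  fixes n :: nat and S :: "(nat \<times> nat) set"
  assumes sub: "S \<subseteq> {1..n} \<times> {1..n}" and n1: "(n,1) \<in> S"
    and row: "\<And>j. (n,j) \<in> S \<Longrightarrow> j = 1" and n2: "n \<ge> 2"
begin

lemma finS: "finite S" by (rule finite_subset[OF sub]) auto

lemma S_bounds: "(i,j) \<in> S \<Longrightarrow> 1 \<le> i \<and> i \<le> n \<and> 1 \<le> j \<and> j \<le> n"
  using sub by auto

lemma above_set: "i \<le> n \<Longrightarrow> {i'. i'<i \<and> (i', sh j) \<in> psi n S} = {i'. i'<i \<and> (i',j)\<in>S}"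
  by (auto simp: psi_def)

lemma above_ex: "i \<le> n \<Longrightarrow> (\<exists>i'<i. (i', sh j) \<in> psi n S) \<longleftrightarrow> (\<exists>i'<i. (i',j)\<in>S)"
  using above_set[of i j] by blast

lemma left_set: "i \<le> n \<Longrightarrow> i \<noteq> n \<Longrightarrow> {j'. j' < sh j \<and> (i,j') \<in> psi n S} = sh ` {j'. j'<j \<and> (i,j')\<in>S}"
  by (auto simp: psi_def)

lemma left_ex: "(i,j) \<in> S \<Longrightarrow> (\<exists>j'<sh j. (i,j') \<in> psi n S) \<longleftrightarrow> (\<exists>j'<j. (i,j')\<in>S)"
proof (cases "i = n")
  case True
  assume "(i,j) \<in> S"
  then have j: "j = 1" using row True by simp
  have "(n,0) \<notin> S" using S_bounds by fastforce
  then have "(n,0) \<notin> psi n S" unfolding psi_def using n2 by (auto simp: sh_def split: if_splits)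
  have "\<And>j'::nat. j' < 1 \<Longrightarrow> j' = 0" by simp
  then show ?thesis using True j \<open>(n,0) \<notin> psi n S\<close> \<open>(n,0) \<notin> S\<close> by (metis sh_1(1))
next
  case False
  assume "(i,j) \<in> S"
  then have "i \<le> n" using S_bounds by blast
  then show ?thesis using left_set[of i j] False by auto
qed

lemma g_pt_psi: "p \<in> S \<Longrightarrow> g p \<in> psi n S" unfolding psi_def by blast
lemma n1_psi: "(n,1) \<in> psi n S" using g_pt_psi[OF n1] by simp
lemma n1_psi': "(n,Suc 0) \<in> psi n S" using n1_psi by simp

lemma col2_psi: "(i, 2) \<in> psi n S \<longleftrightarrow> i = n"
  unfolding psi_def using n2 by auto

lemma EO_point: "p \<in> S \<Longrightarrow>
  (case g p of (i,j) \<Rightarrow> (i, j) \<noteq> (1, 1) \<longrightarrow>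
        ((\<exists>i'<i. (i', j) \<in> psi n S) \<noteq> (\<exists>j'<j. (i, j') \<in> psi n S)))
  \<longleftrightarrow> (case p of (i,j) \<Rightarrow> (i, j) \<noteq> (1, 1) \<longrightarrow>
        ((\<exists>i'<i. (i', j) \<in> S) \<noteq> (\<exists>j'<j. (i, j') \<in> S)))"
proof -
  assume p: "p \<in> S"
  obtain i j where pij: "p = (i,j)" by (cases p)
  have "i \<le> n" using p pij S_bounds by blast
  have e1: "(\<exists>i'<i. (i', sh j) \<in> psi n S) = (\<exists>i'<i. (i', j) \<in> S)" using above_ex \<open>i \<le> n\<close> by blast
  have e2: "(\<exists>j'<sh j. (i, j') \<in> psi n S) = (\<exists>j'<j. (i, j') \<in> S)" using left_ex p pij by blast
  have e3: "((i, sh j) \<noteq> (1,1)) = ((i,j) \<noteq> (1,1))" by (simp add: sh_def)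
  show ?thesis unfolding pij g_simp prod.case e1 e2 e3 by (rule refl)
qed

lemma EO_iff: "EO (psi n S) \<longleftrightarrow> EO S"
proof -
  have A: "\<exists>i'<n+1. (i', 1) \<in> psi n S" using n1_psi by auto
  have B: "\<not>(\<exists>j'<1. (n+1, j') \<in> psi n S)" unfolding psi_def using S_bounds by auto
  have C: "\<not>(\<exists>i'<n. (i', 2) \<in> psi n S)" using col2_psi by auto
  have D: "\<exists>j'<2. (n, j') \<in> psi n S" using n1_psi by (intro exI[of _ 1]) simp
  have pt2: "(case (n,2) of (i,j) \<Rightarrow> (i, j) \<noteq> (1, 1) \<longrightarrow>
        ((\<exists>i'<i. (i', j) \<in> psi n S) \<noteq> (\<exists>j'<j. (i, j') \<in> psi n S)))"
    unfolding prod.case using C D by blast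
  have pt3: "(case (n+1,1) of (i,j) \<Rightarrow> (i, j) \<noteq> (1, 1) \<longrightarrow>
        ((\<exists>i'<i. (i', j) \<in> psi n S) \<noteq> (\<exists>j'<j. (i, j') \<in> psi n S)))"
    using A B by simp
  define P where "P = (\<lambda>q. (case q of (i,j) \<Rightarrow> (i, j) \<noteq> (1, 1) \<longrightarrow>
        ((\<exists>i'<i. (i', j) \<in> psi n S) \<noteq> (\<exists>j'<j. (i, j') \<in> psi n S))))"
  have U: "psi n S = g ` S \<union> {(n,2),(n+1,1)}" by (simp add: psi_def)
  have "EO (psi n S) \<longleftrightarrow> (\<forall>q\<in>psi n S. P q)" unfolding EO_def P_def by simp
  also have "\<dots> \<longleftrightarrow> (\<forall>p\<in>S. P (g p))" using pt2 pt3 unfolding P_def[symmetric]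
    by (subst U) auto
  finally have "EO (psi n S) \<longleftrightarrow> (\<forall>p\<in>S. (case g p of (i,j) \<Rightarrow> (i, j) \<noteq> (1, 1) \<longrightarrow>
        ((\<exists>i'<i. (i', j) \<in> psi n S) \<noteq> (\<exists>j'<j. (i, j') \<in> psi n S))))" unfolding P_def .
  also have "\<dots> \<longleftrightarrow> EO S" unfolding EO_def using EO_point by simp
  finally show ?thesis .
qed

lemma parent_g:
  assumes eo: "EO S" and p: "p \<in> S" "p \<noteq> (1,1)"
  shows "parent (psi n S) (g p) = g (parent S p)"
proof -
  obtain i j where pij: "p = (i,j)" by (cases p)
  have "i \<le> n" using p pij S_bounds by blast
  show ?thesis
  proof (cases "\<exists>i'<i. (i', j) \<in> S")
    case True
    then have T2: "\<exists>i'<i. (i', sh j) \<in> psi n S" using above_ex[OF \<open>i \<le> n\<close>] by blast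
    show ?thesis using parent_above[OF True] parent_above[OF T2] above_set[OF \<open>i \<le> n\<close>] pij
      by simp
  next
    case False
    then have F2: "\<not>(\<exists>i'<i. (i', sh j) \<in> psi n S)" using above_ex[OF \<open>i \<le> n\<close>] by blast
    have L: "\<exists>j'<j. (i, j') \<in> S" using EO_D[OF eo] p pij False by blast
    have "i \<noteq> n"
    proof
      assume "i = n"
      then have "j = 1" using row p pij by simp
      then show False using L by (auto simp: \<open>i = n\<close> dest: S_bounds)
    qed
    let ?X = "{j'. j'<j \<and> (i,j')\<in>S}"
    have fin: "finite ?X" by (rule finite_subset[of _ "{..<j}"]) auto
    have ne: "?X \<noteq> {}" using L by auto
    have "Max (sh ` ?X) = sh (Max ?X)" using mono_Max_commute[OF mono_sh fin ne] by simp
    then show ?thesis using parent_left[OF False] parent_left[OF F2] left_set[OF \<open>i \<le> n\<close> \<open>i \<noteq> n\<close>] pij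
      by simp
  qed
qed

lemma parent_n2: "parent (psi n S) (n,2) = (n,1)"
proof -
  have C: "\<not>(\<exists>i'<n. (i', 2) \<in> psi n S)" using col2_psi by auto
  have "{j'. j' < 2 \<and> (n, j') \<in> psi n S} = {1}"
  proof -
    have "(n,0) \<notin> psi n S" unfolding psi_def using S_bounds n2 by (auto simp: sh_def split: if_splits)
    then show ?thesis using n1_psi by (auto simp: less_2_cases_iff)
  qed
  then show ?thesis using parent_left[OF C] by simp
qed

lemma parent_n1: "parent (psi n S) (n+1,1) = (n,1)"
proof -
  have A: "\<exists>i'<n+1. (i', 1) \<in> psi n S" using n1_psi by auto
  have "Max {i'. i' < n+1 \<and> (i', 1) \<in> psi n S} = n"
    by (rule Max_eqI) (auto simp: n1_psi n1_psi')
  then show ?thesis using parent_above[OF A] by simp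
qed

lemma g_11: "g p = (1,1) \<longleftrightarrow> p = (1,1)" by (cases p) auto
lemma g_n1: "g p = (n,1) \<longleftrightarrow> p = (n,1)" by (cases p) auto

lemma children_g:
  assumes eo: "EO S" and p: "p \<in> S"
  shows "children (psi n S) (g p) = g ` children S p \<union> (if p = (n,1) then {(n,2),(n+1,1)} else {})"
proof (rule set_eqI)
  fix q
  show "q \<in> children (psi n S) (g p) \<longleftrightarrow>
        q \<in> g ` children S p \<union> (if p = (n,1) then {(n,2),(n+1,1)} else {})"
  proof
    assume "q \<in> children (psi n S) (g p)"
    then have q: "q \<in> psi n S" "q \<noteq> (1,1)" "parent (psi n S) q = g p" unfolding children_def by auto
    from q(1) show "q \<in> g ` children S p \<union> (if p = (n,1) then {(n,2),(n+1,1)} else {})"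
    proof (rule psi_cases)
      fix r assume r: "r \<in> S" "q = g r"
      then have "r \<noteq> (1,1)" using q(2) g_11 by auto
      then have "parent S r = p" using q(3) r parent_g[OF eo r(1)] by simp
      then have "r \<in> children S p" using r \<open>r \<noteq> (1,1)\<close> unfolding children_def by auto
      then show ?thesis using r by auto
    next
      assume qq: "q = (n,2)"
      then have "g p = (n,1)" using q(3) parent_n2 by simp
      then have "p = (n,1)" using g_n1 by blast
      then show ?thesis using qq by simp
    next
      assume qq: "q = (n+1,1)"
      then have "g p = (n,1)" using q(3) parent_n1 by simp
      then have "p = (n,1)" using g_n1 by blast
      then show ?thesis using qq by simp
    qed
  next
    assume "q \<in> g ` children S p \<union> (if p = (n,1) then {(n,2),(n+1,1)} else {})"
    then show "q \<in> children (psi n S) (g p)"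
    proof
      assume "q \<in> g ` children S p"
      then obtain r where r: "r \<in> S" "r \<noteq> (1,1)" "parent S r = p" "q = g r"
        unfolding children_def by auto
      then show ?thesis using parent_g[OF eo r(1,2)] g_pt_psi g_11 unfolding children_def by auto
    next
      assume "q \<in> (if p = (n,1) then {(n,2),(n+1,1)} else {})"
      then have "p = (n,1)" "q = (n,2) \<or> q = (n+1,1)" by (auto split: if_splits)
      then show ?thesis using parent_n1 parent_n2 n2 unfolding children_def psi_def by auto
    qed
  qed
qed

lemma children_n2: assumes eo: "EO S" shows "children (psi n S) (n,2) = {}"
proof -
  { fix q assume q: "q \<in> psi n S" "q \<noteq> (1,1)" "parent (psi n S) q = (n,2)"
    from q(1) have False
    proof (rule psi_cases)
      fix r assume r: "r \<in> S" "q = g r"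
      then have "r \<noteq> (1,1)" using q(2) g_11 by auto
      then have "parent (psi n S) q = g (parent S r)" using parent_g[OF eo r(1)] r by simp
      then show False using q(3) by (cases "parent S r") simp
    qed (use q(3) parent_n1 parent_n2 in auto) }
  then show ?thesis unfolding children_def by auto
qed

lemma children_n1: assumes eo: "EO S" shows "children (psi n S) (n+1,1) = {}"
proof -
  { fix q assume q: "q \<in> psi n S" "q \<noteq> (1,1)" "parent (psi n S) q = (n+1,1)"
    from q(1) have False
    proof (rule psi_cases)
      fix r assume r: "r \<in> S" "q = g r"
      then have r1: "r \<noteq> (1,1)" using q(2) g_11 by auto
      then have "parent (psi n S) q = g (parent S r)" using parent_g[OF eo r(1)] r by simp
      moreover have "parent S r \<in> S" using parent_props[OF eo r(1) r1] by simp
      ultimately show False using q(3) S_bounds by (cases "parent S r") fastforce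
    qed (use q(3) parent_n1 parent_n2 in auto) }
  then show ?thesis unfolding children_def by auto
qed

lemma card_children_g:
  assumes eo: "EO S" and p: "p \<in> S"
  shows "card (children (psi n S) (g p)) =
    (if p = (n,1) then card (children S p) + 2 else card (children S p))"
proof -
  have fin: "finite (children S p)" using finS unfolding children_def by simp
  have cg: "card (g ` children S p) = card (children S p)"
    using inj_g by (simp add: card_image inj_on_subset)
  show ?thesis
  proof (cases "p = (n,1)")
    case True
    have disj: "g ` children S p \<inter> {(n,2),(n+1,1)} = {}"
    proof -
      have "(n+1,1) \<notin> g ` children S p"
      proof
        assume "(n+1,1) \<in> g ` children S p"
        then obtain r where "r \<in> children S p" "(n+1,1) = g r" by blast
        then have "r \<in> S" "fst r = n+1" unfolding children_def by (auto simp: g_def)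
        then show False using S_bounds by (cases r) fastforce
      qed
      moreover have "(n,2) \<notin> g ` children S p"
      proof
        assume "(n,2) \<in> g ` children S p"
        then obtain r where "(n,2) = g r" by blast
        then show False by (auto simp: g_def)
      qed
      ultimately show ?thesis by auto
    qed
    have "card (g ` children S p \<union> {(n,2),(n+1,1)}) = card (children S p) + 2"
      using card_Un_disjoint[OF finite_imageI[OF fin] _ disj] cg n2 by simp
    then show ?thesis using children_g[OF eo p] True by simp
  next
    case False
    then show ?thesis using children_g[OF eo p] cg by simp
  qed
qed

lemma leaves_g: assumes eo: "EO S" and p: "p \<in> S" "p \<noteq> (n,1)"
  shows "g p \<in> leaves (psi n S) \<longleftrightarrow> p \<in> leaves S"
  using children_g[OF eo p(1)] p g_pt_psi unfolding leaves_def by auto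

lemma leaves_extra: assumes eo: "EO S"
  shows "(n,2) \<in> leaves (psi n S)" "(n+1,1) \<in> leaves (psi n S)" "(n,1) \<notin> leaves (psi n S)"
proof -
  show "(n,2) \<in> leaves (psi n S)" using children_n2[OF eo] unfolding leaves_def psi_def by auto
  show "(n+1,1) \<in> leaves (psi n S)" using children_n1[OF eo] unfolding leaves_def psi_def by auto
  have "children (psi n S) (g (n,1)) \<noteq> {}" using children_g[OF eo n1] by simp
  then show "(n,1) \<notin> leaves (psi n S)" unfolding leaves_def by simp
qed

lemma rows_iff: "(\<forall>i\<in>{1..n+1}. \<exists>j. (i,j) \<in> psi n S) \<longleftrightarrow> (\<forall>i\<in>{1..n}. \<exists>j. (i,j) \<in> S)"
proof
  assume A: "\<forall>i\<in>{1..n+1}. \<exists>j. (i,j) \<in> psi n S"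
  show "\<forall>i\<in>{1..n}. \<exists>j. (i,j) \<in> S"
  proof
    fix i assume i: "i \<in> {1..n}"
    then have "i \<in> {1..n+1}" by auto
    then obtain j where "(i,j) \<in> psi n S" using A by blast
    then show "\<exists>j. (i,j) \<in> S"
    proof (rule psi_cases)
      fix p assume "p \<in> S" "(i,j) = g p" then show ?thesis by (cases p) auto
    next
      assume "(i,j) = (n,2)" then show ?thesis using n1 by auto
    next
      assume "(i,j) = (n+1,1)" then show ?thesis using i by auto
    qed
  qed
next
  assume A: "\<forall>i\<in>{1..n}. \<exists>j. (i,j) \<in> S"
  show "\<forall>i\<in>{1..n+1}. \<exists>j. (i,j) \<in> psi n S"
  proof
    fix i assume i: "i \<in> {1..n+1}"
    show "\<exists>j. (i,j) \<in> psi n S"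
    proof (cases "i = n+1")
      case True then show ?thesis unfolding psi_def by auto
    next
      case False
      then have "i \<in> {1..n}" using i by auto
      then obtain j where "(i,j) \<in> S" using A by blast
      then have "g (i,j) \<in> psi n S" by (rule g_pt_psi)
      then show ?thesis by auto
    qed
  qed
qed

lemma cols_iff: "(\<forall>j\<in>{1..n+1}. \<exists>i. (i,j) \<in> psi n S) \<longleftrightarrow> (\<forall>j\<in>{1..n}. \<exists>i. (i,j) \<in> S)"
proof
  assume A: "\<forall>j\<in>{1..n+1}. \<exists>i. (i,j) \<in> psi n S"
  show "\<forall>j\<in>{1..n}. \<exists>i. (i,j) \<in> S"
  proof
    fix j assume j: "j \<in> {1..n}"
    then have "sh j \<in> {1..n+1}" by (auto simp: sh_def)
    then obtain i where "(i, sh j) \<in> psi n S" using A by blast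
    then show "\<exists>i. (i,j) \<in> S"
    proof (rule psi_cases)
      fix p assume "p \<in> S" "(i,sh j) = g p" then show ?thesis by (cases p) auto
    next
      assume "(i,sh j) = (n,2)" then show ?thesis by auto
    next
      assume "(i,sh j) = (n+1,1)" then show ?thesis using n1 by auto
    qed
  qed
next
  assume A: "\<forall>j\<in>{1..n}. \<exists>i. (i,j) \<in> S"
  show "\<forall>j\<in>{1..n+1}. \<exists>i. (i,j) \<in> psi n S"
  proof
    fix j assume j: "j \<in> {1..n+1}"
    show "\<exists>i. (i,j) \<in> psi n S"
    proof (cases "j \<le> 2")
      case True
      then have "j = 1 \<or> j = 2" using j by auto
      then show ?thesis using n1_psi unfolding psi_def by auto
    next
      case False
      then have "j - 1 \<in> {1..n}" using j by auto
      then obtain i where "(i,j-1) \<in> S" using A by blast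
      then have "g (i,j-1) \<in> psi n S" by (rule g_pt_psi)
      moreover have "sh (j-1) = j" using False by (auto simp: sh_def)
      ultimately show ?thesis by auto
    qed
  qed
qed

lemma grid_psi: "psi n S \<subseteq> {1..n+1} \<times> {1..n+1}"
  using sub n2 unfolding psi_def by (auto simp: sh_def)

lemma one_psi: "(1,1) \<in> psi n S \<longleftrightarrow> (1,1) \<in> S"
proof -
  have "(1,1) = g (1,1)" by simp
  then show ?thesis using psi_g[of "(1,1)" n S] n2 by simp
qed


definition LS :: "nat \<Rightarrow> (nat \<times> nat) set" where "LS m = {(i, m + 1 - i) | i. i \<in> {1..m}}"

lemma sh_diag: "i < n \<Longrightarrow> sh (n + 1 - i) = n + 1 + 1 - i" by (auto simp: sh_def)

lemma fwd:
  assumes U: "upper_diagonal_cnm n S"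
  shows "upper_diagonal_cnm (n+1) (psi n S)"
proof -
  have cnm: "is_cnm n S" and lv: "leaves S = LS n" using U unfolding upper_diagonal_cnm_def LS_def by auto
  have eo: "EO S" using cnm by (rule cnm_EO)
  have c: "\<forall>p\<in>S. card (children S p) = 0 \<or> card (children S p) = 2" using cnm unfolding is_cnm_def by blast
  have "(n,1) \<in> LS n" unfolding LS_def using n2 by force
  then have n1leaf: "children S (n,1) = {}" using lv unfolding leaves_def by blast
  have cards: "\<forall>q\<in>psi n S. card (children (psi n S) q) = 0 \<or> card (children (psi n S) q) = 2"
  proof
    fix q assume "q \<in> psi n S"
    then show "card (children (psi n S) q) = 0 \<or> card (children (psi n S) q) = 2"
    proof (rule psi_cases)
      fix p assume p: "p \<in> S" "q = g p"
      show ?thesis using card_children_g[OF eo p(1)] c p n1leaf by auto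
    next
      assume "q = (n,2)" then show ?thesis using children_n2[OF eo] by simp
    next
      assume "q = (n+1,1)" then show ?thesis using children_n1[OF eo] by simp
    qed
  qed
  have leaves: "leaves (psi n S) = LS (n+1)"
  proof (rule set_eqI)
    fix q
    show "q \<in> leaves (psi n S) \<longleftrightarrow> q \<in> LS (n+1)"
    proof
      assume ql: "q \<in> leaves (psi n S)"
      then have "q \<in> psi n S" unfolding leaves_def by simp
      then show "q \<in> LS (n+1)"
      proof (rule psi_cases)
        fix p assume p: "p \<in> S" "q = g p"
        have "p \<noteq> (n,1)" using leaves_extra(3)[OF eo] ql p by auto
        then have "p \<in> LS n" using leaves_g[OF eo p(1)] ql p lv by simp
        then obtain i where i: "p = (i, n+1-i)" "i \<in> {1..n}" unfolding LS_def by auto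
        then have "i < n" using \<open>p \<noteq> (n,1)\<close> by auto
        then show ?thesis using i p sh_diag unfolding LS_def by auto
      next
        assume "q = (n,2)" then show ?thesis unfolding LS_def using n2
          by (auto intro!: exI[of _ n])
      next
        assume "q = (n+1,1)" then show ?thesis unfolding LS_def by auto
      qed
    next
      assume "q \<in> LS (n+1)"
      then obtain i where i: "q = (i, n+1+1-i)" "i \<in> {1..n+1}" unfolding LS_def by auto
      show "q \<in> leaves (psi n S)"
      proof (cases "i < n")
        case True
        let ?p = "(i, n+1-i)"
        have "?p \<in> leaves S" using lv i True unfolding LS_def by auto
        moreover have "?p \<in> S" "?p \<noteq> (n,1)" using calculation True unfolding leaves_def by auto
        ultimately have "g ?p \<in> leaves (psi n S)" using leaves_g[OF eo] by blast
        then show ?thesis using i sh_diag[OF True] by simp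
      next
        case False
        then have "i = n \<or> i = n+1" using i by auto
        then show ?thesis using i leaves_extra[OF eo] by auto
      qed
    qed
  qed
  have "is_cnm (n+1) (psi n S)"
    using grid_psi one_psi EO_iff rows_iff cols_iff cnm cards
    unfolding is_cnm_alt by simp
  then show ?thesis using leaves unfolding upper_diagonal_cnm_def LS_def by simp
qed


lemma bwd:
  assumes U: "upper_diagonal_cnm (n+1) (psi n S)"
  shows "upper_diagonal_cnm n S"
proof -
  have cnm: "is_cnm (n+1) (psi n S)" and lv: "leaves (psi n S) = LS (n+1)"
    using U unfolding upper_diagonal_cnm_def LS_def by auto
  have eo: "EO S" using cnm_EO[OF cnm] EO_iff by simp
  have c: "\<forall>q\<in>psi n S. card (children (psi n S) q) = 0 \<or> card (children (psi n S) q) = 2"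
    using cnm unfolding is_cnm_def by blast
  have finc: "finite (children S p)" for p using finS unfolding children_def by simp
  have c1: "card (children S (n,1)) = 0"
    using c g_pt_psi[OF n1] card_children_g[OF eo n1] by auto
  then have n1leaf: "children S (n,1) = {}" using finc by simp
  have cards: "\<forall>p\<in>S. card (children S p) = 0 \<or> card (children S p) = 2"
  proof
    fix p assume p: "p \<in> S"
    show "card (children S p) = 0 \<or> card (children S p) = 2"
    proof (cases "p = (n,1)")
      case True then show ?thesis using c1 by simp
    next
      case False then show ?thesis using c g_pt_psi[OF p] card_children_g[OF eo p] by auto
    qed
  qed
  have leaves: "leaves S = LS n"
  proof (rule set_eqI)
    fix p
    show "p \<in> leaves S \<longleftrightarrow> p \<in> LS n"
    proof
      assume pl: "p \<in> leaves S"
      then have pS: "p \<in> S" unfolding leaves_def by simp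
      show "p \<in> LS n"
      proof (cases "p = (n,1)")
        case True then show ?thesis unfolding LS_def using n2 by force
      next
        case False
        then have "g p \<in> LS (n+1)" using leaves_g[OF eo pS False] pl lv by simp
        then obtain i where i: "g p = (i, n+1+1-i)" "i \<in> {1..n+1}" unfolding LS_def by auto
        obtain a b where ab: "p = (a,b)" by (cases p)
        have bnd: "1 \<le> a" "a \<le> n" "1 \<le> b" "b \<le> n" using S_bounds pS ab by auto
        have ai: "a = i" "sh b = n+1+1-i" using i ab by auto
        show ?thesis
        proof (cases "b \<le> 1")
          case True
          then have "b = 1" using bnd by simp
          then show ?thesis using ai bnd by simp
        next
          case False
          then have "b = n + 1 - a" using ai bnd by (simp add: sh_def)
          then show ?thesis unfolding LS_def using ab bnd by auto
        qed
      qed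
    next
      assume "p \<in> LS n"
      then obtain i where i: "p = (i, n+1-i)" "i \<in> {1..n}" unfolding LS_def by auto
      show "p \<in> leaves S"
      proof (cases "i < n")
        case True
        have "g p = (i, n+1+1-i)" using i sh_diag[OF True] by simp
        then have gl: "g p \<in> leaves (psi n S)" using lv i unfolding LS_def by auto
        then have "g p \<in> psi n S" unfolding leaves_def by simp
        then have pS: "p \<in> S" using psi_g[of p n S] i by simp
        have "p \<noteq> (n,1)" using True i by simp
        then show ?thesis using leaves_g[OF eo pS] gl by simp
      next
        case False
        then have "p = (n,1)" using i by auto
        then show ?thesis using n1 n1leaf unfolding leaves_def by simp
      qed
    qed
  qed
  have "(1,1) \<in> S" using cnm one_psi unfolding is_cnm_def by simp
  then have "is_cnm n S"
    using sub eo rows_iff cols_iff cnm cards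
    unfolding is_cnm_alt by simp
  then show ?thesis using leaves unfolding upper_diagonal_cnm_def LS_def by simp
qed

end


lemma upper_hyps:
  assumes U: "upper_diagonal_cnm n S" and n2: "n \<ge> 2"
  shows "S \<subseteq> {1..n} \<times> {1..n}" "(n,1) \<in> S" "\<And>j. (n,j) \<in> S \<Longrightarrow> j = 1"
proof -
  show sub: "S \<subseteq> {1..n} \<times> {1..n}" using U unfolding upper_diagonal_cnm_def is_cnm_def by blast
  have "(n, n+1-n) \<in> leaves S" using U n2 unfolding upper_diagonal_cnm_def by auto
  then show "(n,1) \<in> S" unfolding leaves_def by simp
  fix j assume "(n,j) \<in> S"
  then show "j = 1" using triangle[OF U, of "(n,j)"] sub by auto
qed

lemma fin_upper: "finite {T. upper_diagonal_cnm m T \<and> P T}"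
proof (rule finite_subset)
  show "{T. upper_diagonal_cnm m T \<and> P T} \<subseteq> Pow ({1..m} \<times> {1..m})"
    unfolding upper_diagonal_cnm_def is_cnm_def by blast
qed simp

theorem lemma4p9:
  fixes n :: nat
  assumes "n \<ge> 2"
  shows "int (f n (n - 1)) = int (f (n + 1) (n - 1)) - int (f n (n - 2))"
proof -
  have n2: "n \<ge> 2" by fact
  define A where "A = {T. upper_diagonal_cnm (n+1) T \<and> ((\<forall>i\<in>{1..n-1}. (i, n+1-i) \<notin> T) \<and> (n,1) \<in> T)}"
  define B where "B = {T. upper_diagonal_cnm n T \<and> (\<forall>i\<in>{1..n-1}. (i, n-i) \<notin> T)}"
  define C where "C = {T. upper_diagonal_cnm n T \<and> ((\<forall>i\<in>{1..n-2}. (i, n-i) \<notin> T) \<and> (n-1,1) \<in> T)}"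
  define D where "D = {T. upper_diagonal_cnm n T \<and> (\<forall>i\<in>{1..n-2}. (i, n-i) \<notin> T)}"
  have fA: "f (n+1) (n-1) = card A"
  proof -
    have e: "n - 1 + 1 = n" "n + 1 - (n - 1) - 1 = 1" "n - 1 + 2 \<le> n + 1" using n2 by auto
    show ?thesis unfolding f_def A_def using e by simp
  qed
  have fB: "f n (n-1) = card B"
  proof -
    have e: "\<not> n - 1 + 2 \<le> n" "n - 1 + 1 = n" using n2 by auto
    show ?thesis unfolding f_def B_def using e by simp
  qed
  have fC: "f n (n-2) = card C"
  proof -
    have e: "n - 2 + 2 \<le> n" "n - 2 + 1 = n - 1" "n - (n - 2) - 1 = 1" using n2 by auto
    show ?thesis unfolding f_def C_def using e by simp
  qed
  have finB: "finite B" unfolding B_def by (rule fin_upper)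
  have finC: "finite C" unfolding C_def by (rule fin_upper)
  have DBC: "D = B \<union> C"
  proof -
    have "\<And>T. (\<forall>i\<in>{1..n-1}. (i, n-i) \<notin> T) \<longleftrightarrow> (\<forall>i\<in>{1..n-2}. (i, n-i) \<notin> T) \<and> (n-1, 1) \<notin> T"
    proof -
      fix T :: "(nat \<times> nat) set"
      have s: "{1..n-1} = insert (n-1) {1..n-2}" using n2 by auto
      have "n - (n-1) = 1" using n2 by simp
      then show "(\<forall>i\<in>{1..n-1}. (i, n-i) \<notin> T) \<longleftrightarrow> (\<forall>i\<in>{1..n-2}. (i, n-i) \<notin> T) \<and> (n-1, 1) \<notin> T"
        unfolding s by auto
    qed
    then show ?thesis unfolding B_def C_def D_def by auto
  qed
  have BC: "B \<inter> C = {}"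
  proof -
    have "n - (n-1) = 1" "n - 1 \<in> {1..n-1}" using n2 by auto
    then show ?thesis unfolding B_def C_def by fastforce
  qed
  have cD: "card D = card B + card C" using DBC BC finB finC by (simp add: card_Un_disjoint)
  have img: "psi n ` D = A"
  proof
    show "psi n ` D \<subseteq> A"
    proof
      fix T assume "T \<in> psi n ` D"
      then obtain S where S: "S \<in> D" "T = psi n S" by auto
      have U: "upper_diagonal_cnm n S" and cond: "\<forall>i\<in>{1..n-2}. (i, n-i) \<notin> S" using S unfolding D_def by auto
      note h = upper_hyps[OF U n2]
      have "upper_diagonal_cnm (n+1) T" using fwd[OF h n2 U] S by simp
      moreover have "(n,1) \<in> T" using n1_psi[OF h n2] S by simp
      moreover have "\<forall>i\<in>{1..n-1}. (i, n+1-i) \<notin> T"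
      proof
        fix i assume i: "i \<in> {1..n-1}"
        show "(i, n+1-i) \<notin> T"
        proof (cases "i = n-1")
          case True
          then have "n+1-i = 2" "i \<noteq> n" using n2 by auto
          then show ?thesis using col2_psi[OF h n2, of i] S by simp
        next
          case False
          then have ii: "i \<in> {1..n-2}" "i < n" using i by auto
          have "(i, n+1-i) = g (i, n-i)" using ii n2 by (auto simp: sh_def)
          moreover have "g (i, n-i) \<notin> psi n S" using psi_g[of "(i,n-i)" n S] cond ii by simp
          ultimately show ?thesis using S by simp
        qed
      qed
      ultimately show "T \<in> A" unfolding A_def by simp
    qed
  next
    show "A \<subseteq> psi n ` D"
    proof
      fix T assume "T \<in> A"
      then have U: "upper_diagonal_cnm (n+1) T" and cond: "\<forall>i\<in>{1..n-1}. (i, n+1-i) \<notin> T"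
        and n1T: "(n,1) \<in> T" unfolding A_def by auto
      have cnm: "is_cnm (n+1) T" using U unfolding upper_diagonal_cnm_def by simp
      have subT: "T \<subseteq> {1..n+1} \<times> {1..n+1}" using cnm unfolding is_cnm_def by blast
      have eoT: "EO T" using cnm by (rule cnm_EO)
      have tri: "\<And>a b. (a,b) \<in> T \<Longrightarrow> a + b \<le> n + 2" using triangle[OF U] by fastforce
      have lvT: "leaves T = {(i, n + 1 + 1 - i) | i. i \<in> {1..n+1}}" using U unfolding upper_diagonal_cnm_def by simp
      have n2T: "(n,2) \<in> T"
      proof -
        have "(n, n+1+1-n) \<in> leaves T" using lvT n2 by auto
        then show ?thesis unfolding leaves_def by simp
      qed
      have n11T: "(n+1,1) \<in> T"
      proof -
        have "(n+1, n+1+1-(n+1)) \<in> leaves T" using lvT n2 by auto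
        then show ?thesis unfolding leaves_def by simp
      qed
      define S where "S = {p. g p \<in> T \<and> fst p \<le> n}"
      have sub: "S \<subseteq> {1..n} \<times> {1..n}"
      proof
        fix p assume "p \<in> S"
        then obtain a b where p: "p = (a,b)" "(a, sh b) \<in> T" "a \<le> n" unfolding S_def by (cases p) auto
        then have "1 \<le> a" "1 \<le> sh b" "sh b \<le> n+1" using subT by auto
        then show "p \<in> {1..n} \<times> {1..n}" using p by (auto simp: sh_def split: if_splits)
      qed
      have n1: "(n,1) \<in> S" unfolding S_def using n1T by simp
      have row: "\<And>j. (n,j) \<in> S \<Longrightarrow> j = 1"
      proof -
        fix j assume nj: "(n,j) \<in> S"
        then have nsj: "(n, sh j) \<in> T" unfolding S_def by simp
        have "j \<ge> 1" using sub nj by auto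
        have "n + sh j \<le> n + 2" using tri[OF nsj] .
        then have "sh j \<le> 2" by simp
        then show "j = 1" using \<open>j \<ge> 1\<close> by (auto simp: sh_def split: if_splits)
      qed
      have psiT: "psi n S = T"
      proof
        show "psi n S \<subseteq> T" unfolding psi_def S_def using n2T n11T by auto
      next
        show "T \<subseteq> psi n S"
        proof
          fix q assume qT: "q \<in> T"
          obtain a b where q: "q = (a,b)" by (cases q)
          have ab: "1 \<le> a" "a \<le> n+1" "1 \<le> b" "b \<le> n+1" using subT qT q by auto
          show "q \<in> psi n S"
          proof (cases "a = n+1")
            case True
            then have "b = 1" using tri qT q ab by fastforce
            then show ?thesis using True q unfolding psi_def by simp
          next
            case False
            then have an: "a \<le> n" using ab by simp
            show ?thesis
            proof (cases "b = 2")
              case True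
              have "a = n"
              proof (rule ccontr)
                assume "a \<noteq> n"
                then have "a < n" using an by simp
                have "(\<exists>i'<n. (i', 2) \<in> T)" using qT q True \<open>a < n\<close> by auto
                moreover have "(\<exists>j'<2. (n, j') \<in> T)" using n1T by (intro exI[of _ 1]) simp
                moreover have "(n,2::nat) \<noteq> (1,1)" by simp
                ultimately show False using EO_D[OF eoT n2T] by blast
              qed
              then show ?thesis using True q unfolding psi_def by simp
            next
              case False
              define b' where "b' = (if b = 1 then 1 else b - 1)"
              have "sh b' = b" using False ab unfolding b'_def by (auto simp: sh_def)
              then have "g (a,b') = q" using q by simp
              moreover have "(a,b') \<in> S" unfolding S_def using \<open>g (a,b') = q\<close> qT an by simp
              ultimately show ?thesis unfolding psi_def by blast
            qed
          qed
        qed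
      qed
      have US: "upper_diagonal_cnm n S" using bwd[OF sub n1 row n2] psiT U by simp
      have "\<forall>i\<in>{1..n-2}. (i, n-i) \<notin> S"
      proof
        fix i assume i: "i \<in> {1..n-2}"
        then have "g (i, n-i) = (i, n+1-i)" using n2 by (auto simp: sh_def)
        moreover have "i \<in> {1..n-1}" using i by auto
        ultimately show "(i, n-i) \<notin> S" using cond unfolding S_def by auto
      qed
      then have "S \<in> D" unfolding D_def using US by simp
      then show "T \<in> psi n ` D" using psiT by blast
    qed
  qed
  have inj: "inj_on (psi n) D"
  proof
    fix S1 S2 assume S1: "S1 \<in> D" and S2: "S2 \<in> D" and eq: "psi n S1 = psi n S2"
    have sub1: "S1 \<subseteq> {1..n} \<times> {1..n}" using S1 upper_hyps(1)[OF _ n2] unfolding D_def by auto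
    have sub2: "S2 \<subseteq> {1..n} \<times> {1..n}" using S2 upper_hyps(1)[OF _ n2] unfolding D_def by auto
    show "S1 = S2"
    proof (rule set_eqI)
      fix p
      show "p \<in> S1 \<longleftrightarrow> p \<in> S2"
      proof (cases "fst p \<le> n")
        case True
        then show ?thesis using psi_g[OF True, of S1] psi_g[OF True, of S2] eq by simp
      next
        case False
        then show ?thesis using sub1 sub2 by auto
      qed
    qed
  qed
  have "card A = card D" using card_image[OF inj] img by simp
  then show ?thesis using fA fB fC cD by simp
qed

end
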